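(* Let $\alpha_1,\dots,\alpha_K\in\mathbb R^d\setminus\{0\}$. (1) For every $\eta\in\mathbb R^d\setminus\{0\}$ there is a (possibly empty) subset $\{\alpha_{k_1},\dots,\alpha_{k_m}\}\subseteq\{\alpha_1,\dots,\alpha_K\}$ with $\mathcal H_\eta=\mathrm{span}\{\alpha_{k_1},\dots,\alpha_{k_m}\}$ (with $\mathcal H_\eta=\{0\}$ if empty) such that (i) $P_{\mathcal H_\eta}\eta=\sum_{p=1}^m\gamma_{k_p}\alpha_{k_p}$ for some $\gamma_{k_1},\dots,\gamma_{k_m}\ge0$; (ii) $\alpha_k^{T}P_{\mathcal H_\eta^\perp}\eta<0$ for every $k\notin\{k_1,\dots,k_m\}$; (iii) $P_{\mathcal H_\eta^\perp}\eta$ is uniquely determined by $\eta$ (independent of the choice of such a subset) and depends continuously on $\eta$; it is called the canonical projection of $\eta$ with respect to $\{\alpha_1,\dots,\alpha_K\}$. (2) Let $\omega_1,\dots,\omega_K>0$ and $\eta_n\in\mathbb R^d$ with $\eta_n/n\to\eta\ne0$. Let $f_n(\theta)=-\sum_{k=1}^K\omega_k\exp(\alpha_k^{T}\theta)+\eta_n^{T}\theta-\tfrac12\theta^{T}\theta$ with unique maximizer $\theta_n$. Then $\theta_n/n\to P_{\mathcal H_\eta^\perp}\eta$ and $f_n(\theta_n)/n^2\to\tfrac12\|P_{\mathcal H_\eta^\perp}\eta\|^2$.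
   Context: $P_{\mathcal H}$ denotes orthogonal projection onto a subspace $\mathcal H$ of $\mathbb R^d$ and $\mathcal H^\perp$ its orthogonal complement. *)

theory Defs
  imports "HOL-Analysis.Analysis"
begin

definition orth_proj :: "'a::euclidean_space set \<Rightarrow> 'a \<Rightarrow> 'a" where
  "orth_proj H x = (THE p. p \<in> H \<and> x - p \<in> orthogonal_comp H)"

text \<open>S (a subset of the indices {..<K}) is an admissible index set for eta w.r.t. alpha_0..alpha_(K-1):
  conditions (i) and (ii) of the statement, with H = span of the alpha_k, k in S.\<close>
definition admissible :: "(nat \<Rightarrow> 'a::euclidean_space) \<Rightarrow> nat \<Rightarrow> 'a \<Rightarrow> nat set \<Rightarrow> bool" where
  "admissible \<alpha> K \<eta> S \<longleftrightarrow>
     S \<subseteq> {..<K} \<and>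
     (\<exists>\<gamma>. (\<forall>k\<in>S. \<gamma> k \<ge> 0) \<and>
          orth_proj (span (\<alpha> ` S)) \<eta> = (\<Sum>k\<in>S. \<gamma> k *\<^sub>R \<alpha> k)) \<and>
     (\<forall>k\<in>{..<K} - S. \<alpha> k \<bullet> orth_proj (orthogonal_comp (span (\<alpha> ` S))) \<eta> < 0)"

definition canon_proj :: "(nat \<Rightarrow> 'a::euclidean_space) \<Rightarrow> nat \<Rightarrow> 'a \<Rightarrow> 'a" where
  "canon_proj \<alpha> K \<eta> =
     orth_proj (orthogonal_comp (span (\<alpha> ` (SOME S. admissible \<alpha> K \<eta> S)))) \<eta>"

end

theory Submission
  imports Defs
begin


lemma orth_proj_eqI:
  fixes H :: "'a::euclidean_space set"
  assumes "subspace H" "p \<in> H" "x - p \<in> orthogonal_comp H"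
  shows "orth_proj H x = p"
  unfolding orth_proj_def
proof (rule the_equality)
  show "p \<in> H \<and> x - p \<in> orthogonal_comp H" using assms by auto
next
  fix q assume q: "q \<in> H \<and> x - q \<in> orthogonal_comp H"
  have "q - p \<in> H" using q assms by (simp add: subspace_diff)
  moreover have "q - p \<in> orthogonal_comp H"
  proof -
    have "(x - p) - (x - q) \<in> orthogonal_comp H"
      using q assms subspace_diff subspace_orthogonal_comp by blast
    then show ?thesis by simp
  qed
  ultimately have "orthogonal (q - p) (q - p)"
    by (auto simp: orthogonal_comp_def)
  then show "q = p" by (simp add: orthogonal_def)
qed

lemma orth_proj_span_decomp:
  fixes A :: "'a::euclidean_space set"
  shows "orth_proj (span A) x \<in> span A"
    and "orth_proj (orthogonal_comp (span A)) x \<in> orthogonal_comp (span A)"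
    and "orth_proj (span A) x + orth_proj (orthogonal_comp (span A)) x = x"
proof -
  obtain y z where y: "y \<in> span A" and z: "\<And>w. w \<in> span A \<Longrightarrow> orthogonal z w" and xyz: "x = y + z"
    using orthogonal_subspace_decomp_exists by metis
  have zc: "z \<in> orthogonal_comp (span A)"
    using z by (auto simp: orthogonal_comp_def orthogonal_commute)
  have 1: "orth_proj (span A) x = y"
    by (rule orth_proj_eqI) (use y zc xyz in auto)
  have 2: "orth_proj (orthogonal_comp (span A)) x = z"
  proof (rule orth_proj_eqI)
    show "x - z \<in> orthogonal_comp (orthogonal_comp (span A))"
      using y xyz orthogonal_comp_subset by auto
  qed (use zc subspace_orthogonal_comp in auto)
  show "orth_proj (span A) x \<in> span A"
    "orth_proj (orthogonal_comp (span A)) x \<in> orthogonal_comp (span A)"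
    "orth_proj (span A) x + orth_proj (orthogonal_comp (span A)) x = x"
    using 1 2 y zc xyz by auto
qed



lemma C_props:
  fixes \<alpha> :: "nat \<Rightarrow> 'a::euclidean_space"
  shows "closed {x. \<forall>k<K. \<alpha> k \<bullet> x \<le> 0}" "convex {x. \<forall>k<K. \<alpha> k \<bullet> x \<le> 0}"
    "0 \<in> {x. \<forall>k<K. \<alpha> k \<bullet> x \<le> 0}"
proof -
  have "{x. \<forall>k<K. \<alpha> k \<bullet> x \<le> 0} = (\<Inter>k\<in>{..<K}. {x. \<alpha> k \<bullet> x \<le> 0})" by auto
  then show "closed {x. \<forall>k<K. \<alpha> k \<bullet> x \<le> 0}"
    by (simp add: closed_INT closed_halfspace_le)
  show "convex {x. \<forall>k<K. \<alpha> k \<bullet> x \<le> 0}"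
    unfolding convex_def
    by (auto simp: inner_add_right intro!: add_nonpos_nonpos mult_nonneg_nonpos)
  show "0 \<in> {x. \<forall>k<K. \<alpha> k \<bullet> x \<le> 0}" by simp
qed

lemma cone_hull_sub:
  fixes \<alpha> :: "nat \<Rightarrow> 'a::euclidean_space"
  assumes "finite A"
  shows "convex_cone hull (\<alpha> ` A) \<subseteq> {(\<Sum>k\<in>A. \<gamma> k *\<^sub>R \<alpha> k) | \<gamma>. \<forall>k\<in>A. \<gamma> k \<ge> 0}"
proof (rule hull_minimal)
  show "\<alpha> ` A \<subseteq> {(\<Sum>k\<in>A. \<gamma> k *\<^sub>R \<alpha> k) | \<gamma>. \<forall>k\<in>A. \<gamma> k \<ge> 0}"
  proof
    fix x assume "x \<in> \<alpha> ` A"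
    then obtain j where j: "j \<in> A" "x = \<alpha> j" by auto
    have "(\<Sum>k\<in>A. (if k = j then 1 else 0) *\<^sub>R \<alpha> k) = \<alpha> j"
      using j assms by (simp add: if_distrib[of "\<lambda>c. c *\<^sub>R _"] sum.delta' cong: if_cong)
    then show "x \<in> {(\<Sum>k\<in>A. \<gamma> k *\<^sub>R \<alpha> k) | \<gamma>. \<forall>k\<in>A. \<gamma> k \<ge> 0}"
      using j by (intro CollectI exI[of _ "\<lambda>k. if k = j then 1 else 0"]) auto
  qed
  show "convex_cone {(\<Sum>k\<in>A. \<gamma> k *\<^sub>R \<alpha> k) | \<gamma>. \<forall>k\<in>A. \<gamma> k \<ge> 0}"
    unfolding convex_cone_iff
  proof (intro conjI ballI allI impI)
    show "0 \<in> {(\<Sum>k\<in>A. \<gamma> k *\<^sub>R \<alpha> k) | \<gamma>. \<forall>k\<in>A. \<gamma> k \<ge> 0}"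
      by (intro CollectI exI[of _ "\<lambda>k. 0"]) auto
  next
    fix x y assume "x \<in> {(\<Sum>k\<in>A. \<gamma> k *\<^sub>R \<alpha> k) | \<gamma>. \<forall>k\<in>A. \<gamma> k \<ge> 0}"
      "y \<in> {(\<Sum>k\<in>A. \<gamma> k *\<^sub>R \<alpha> k) | \<gamma>. \<forall>k\<in>A. \<gamma> k \<ge> 0}"
    then obtain g h where "x = (\<Sum>k\<in>A. g k *\<^sub>R \<alpha> k)" "\<forall>k\<in>A. g k \<ge> 0"
       "y = (\<Sum>k\<in>A. h k *\<^sub>R \<alpha> k)" "\<forall>k\<in>A. h k \<ge> 0" by auto
    then show "x + y \<in> {(\<Sum>k\<in>A. \<gamma> k *\<^sub>R \<alpha> k) | \<gamma>. \<forall>k\<in>A. \<gamma> k \<ge> 0}"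
      by (intro CollectI exI[of _ "\<lambda>k. g k + h k"]) (auto simp: sum.distrib scaleR_add_left)
  next
    fix x and c :: real assume "x \<in> {(\<Sum>k\<in>A. \<gamma> k *\<^sub>R \<alpha> k) | \<gamma>. \<forall>k\<in>A. \<gamma> k \<ge> 0}" "0 \<le> c"
    then obtain g where "x = (\<Sum>k\<in>A. g k *\<^sub>R \<alpha> k)" "\<forall>k\<in>A. g k \<ge> 0" by auto
    then show "c *\<^sub>R x \<in> {(\<Sum>k\<in>A. \<gamma> k *\<^sub>R \<alpha> k) | \<gamma>. \<forall>k\<in>A. \<gamma> k \<ge> 0}"
      using \<open>0 \<le> c\<close> by (intro CollectI exI[of _ "\<lambda>k. c * g k"]) (auto simp: scaleR_sum_right)
  qed
qed

lemma kkt: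
  fixes \<alpha> :: "nat \<Rightarrow> 'a::euclidean_space" and K :: nat and \<eta> :: 'a
  defines "C \<equiv> {x. \<forall>k<K. \<alpha> k \<bullet> x \<le> 0}"
  defines "v \<equiv> closest_point C \<eta>"
  defines "A \<equiv> {k. k < K \<and> \<alpha> k \<bullet> v = 0}"
  shows "v \<in> C" "\<exists>\<gamma>. (\<forall>k\<in>A. \<gamma> k \<ge> 0) \<and> \<eta> - v = (\<Sum>k\<in>A. \<gamma> k *\<^sub>R \<alpha> k)"
proof -
  have Cc: "closed C" "convex C" "C \<noteq> {}" using C_props[of K \<alpha>] unfolding C_def by blast+
  show vC: "v \<in> C" unfolding v_def using closest_point_in_set Cc by blast
  have finA: "finite A" unfolding A_def by auto
  let ?D = "convex_cone hull (\<alpha> ` A)"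
  have "\<eta> - v \<in> ?D"
  proof (rule ccontr)
    assume nD: "\<eta> - v \<notin> ?D"
    obtain a b where ab: "a \<bullet> (\<eta> - v) < b" "\<forall>x\<in>?D. a \<bullet> x > b"
      using separating_hyperplane_closed_point[OF convex_convex_cone_hull closed_convex_cone_hull nD] finA
      by auto
    have b0: "b < 0" using ab(2) convex_cone_hull_contains_0 by fastforce
    have aA: "a \<bullet> \<alpha> k \<ge> 0" if "k \<in> A" for k
    proof (rule ccontr)
      assume neg: "\<not> a \<bullet> \<alpha> k \<ge> 0"
      have "(b / (a \<bullet> \<alpha> k)) *\<^sub>R \<alpha> k \<in> ?D"
        using neg b0 that by (intro convex_cone_hull_mul hull_inc) (auto intro: divide_nonpos_neg)
      then have "a \<bullet> ((b / (a \<bullet> \<alpha> k)) *\<^sub>R \<alpha> k) > b" using ab by blast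
      then show False using neg by simp
    qed
    define d where "d = - a"
    have ud: "(\<eta> - v) \<bullet> d > 0" using ab b0 unfolding d_def by (simp add: inner_commute)
    have ev: "\<forall>\<^sub>F t in at_right (0::real). t > 0 \<and> (\<forall>k\<in>{..<K}. \<alpha> k \<bullet> v + t * (\<alpha> k \<bullet> d) \<le> 0)"
    proof (intro eventually_conj eventually_ball_finite ballI)
      show "\<forall>\<^sub>F t in at_right (0::real). t > 0" by (simp add: eventually_at_right_less)
    next
      fix k assume k: "k \<in> {..<K}"
      show "\<forall>\<^sub>F t in at_right 0. \<alpha> k \<bullet> v + t * (\<alpha> k \<bullet> d) \<le> 0"
      proof (cases "k \<in> A")
        case True
        have "\<alpha> k \<bullet> d \<le> 0" using aA[OF True] unfolding d_def by (simp add: inner_commute)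
        then show ?thesis using True unfolding A_def
          by (auto intro!: eventually_mono[OF eventually_at_right_less] simp: mult_nonneg_nonpos)
      next
        case False
        then have lt: "\<alpha> k \<bullet> v < 0" using vC k unfolding A_def C_def by force
        have "((\<lambda>t. \<alpha> k \<bullet> v + t * (\<alpha> k \<bullet> d)) \<longlongrightarrow> \<alpha> k \<bullet> v + 0 * (\<alpha> k \<bullet> d)) (at_right 0)"
          by (intro tendsto_intros tendsto_ident_at)
        then have "\<forall>\<^sub>F t in at_right 0. \<alpha> k \<bullet> v + t * (\<alpha> k \<bullet> d) < 0"
          using lt by (intro order_tendstoD) auto
        then show ?thesis by (rule eventually_mono) simp
      qed
    qed (simp)
    then obtain t :: real where t: "t > 0" "\<forall>k\<in>{..<K}. \<alpha> k \<bullet> v + t * (\<alpha> k \<bullet> d) \<le> 0"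
      using eventually_happens[OF ev] by auto
    have "v + t *\<^sub>R d \<in> C" using t unfolding C_def by (auto simp: inner_add_right)
    then have "(\<eta> - v) \<bullet> ((v + t *\<^sub>R d) - v) \<le> 0"
      using closest_point_dot[OF Cc(2,1)] unfolding v_def by blast
    then have "t * ((\<eta> - v) \<bullet> d) \<le> 0" by simp
    then show False using t ud by (simp add: mult_le_0_iff)
  qed
  then show "\<exists>\<gamma>. (\<forall>k\<in>A. \<gamma> k \<ge> 0) \<and> \<eta> - v = (\<Sum>k\<in>A. \<gamma> k *\<^sub>R \<alpha> k)"
    using cone_hull_sub[OF finA, of \<alpha>] by auto
qed



lemma adm_proj:
  fixes \<alpha> :: "nat \<Rightarrow> 'a::euclidean_space" and K :: nat and \<eta> :: 'a
  assumes adm: "admissible \<alpha> K \<eta> S"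
  shows "orth_proj (orthogonal_comp (span (\<alpha> ` S))) \<eta> = closest_point {x. \<forall>k<K. \<alpha> k \<bullet> x \<le> 0} \<eta>"
proof -
  define C where "C = {x. \<forall>k<K. \<alpha> k \<bullet> x \<le> 0}"
  have Cc: "closed C" "convex C" "C \<noteq> {}" using C_props[of K \<alpha>] unfolding C_def by blast+
  define H where "H = span (\<alpha> ` S)"
  define v where "v = orth_proj (orthogonal_comp H) \<eta>"
  define p where "p = orth_proj H \<eta>"
  from adm obtain \<gamma> where SK: "S \<subseteq> {..<K}" and g: "\<forall>k\<in>S. \<gamma> k \<ge> 0" and
     pg: "p = (\<Sum>k\<in>S. \<gamma> k *\<^sub>R \<alpha> k)" and out: "\<forall>k\<in>{..<K} - S. \<alpha> k \<bullet> v < 0"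
    unfolding admissible_def p_def v_def H_def by blast
  have pv: "p + v = \<eta>" "p \<in> H" "v \<in> orthogonal_comp H"
    using orth_proj_span_decomp[of "\<alpha> ` S" \<eta>] unfolding p_def v_def H_def by auto
  have vS: "\<alpha> k \<bullet> v = 0" if "k \<in> S" for k
    using pv(3) that span_base[of "\<alpha> k" "\<alpha> ` S"] unfolding H_def orthogonal_comp_def orthogonal_def by blast
  have vC: "v \<in> C" unfolding C_def
  proof (safe)
    fix k assume "k < K"
    then show "\<alpha> k \<bullet> v \<le> 0" using vS out by (cases "k \<in> S") (auto simp: less_imp_le)
  qed
  have pv0: "p \<bullet> v = 0" using pv unfolding orthogonal_comp_def orthogonal_def by blast
  have dot: "(\<eta> - v) \<bullet> (y - v) \<le> 0" if "y \<in> C" for y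
  proof -
    have "(\<eta> - v) \<bullet> (y - v) = p \<bullet> y" proof -
      have "\<eta> - v = p" using pv(1) by (simp add: algebra_simps flip: pv(1))
      then show ?thesis using pv0 by (simp add: inner_diff_right)
    qed
    also have "\<dots> = (\<Sum>k\<in>S. \<gamma> k * (\<alpha> k \<bullet> y))" by (simp add: pg inner_sum_left)
    also have "\<dots> \<le> 0"
      using that SK g unfolding C_def by (intro sum_nonpos) (auto intro: mult_nonneg_nonpos)
    finally show ?thesis .
  qed
  define c where "c = closest_point C \<eta>"
  have cC: "c \<in> C" unfolding c_def using closest_point_in_set Cc by blast
  have "(\<eta> - c) \<bullet> (v - c) \<le> 0" unfolding c_def using closest_point_dot[OF Cc(2,1) vC] .
  moreover have "(\<eta> - v) \<bullet> (c - v) \<le> 0" using dot[OF cC] .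
  ultimately have "(v - c) \<bullet> (v - c) \<le> 0"
    by (simp add: inner_diff_left inner_diff_right inner_commute)
  then have "v = c" by (metis eq_iff_diff_eq_0 inner_eq_zero_iff inner_ge_zero order_antisym)
  then show ?thesis unfolding v_def c_def H_def C_def .
qed

lemma adm_exists:
  fixes \<alpha> :: "nat \<Rightarrow> 'a::euclidean_space" and K :: nat and \<eta> :: 'a
  shows "\<exists>S. admissible \<alpha> K \<eta> S"
proof -
  define C where "C = {x. \<forall>k<K. \<alpha> k \<bullet> x \<le> 0}"
  define v where "v = closest_point C \<eta>"
  define A where "A = {k. k < K \<and> \<alpha> k \<bullet> v = 0}"
  have vC: "v \<in> C" and "\<exists>\<gamma>. (\<forall>k\<in>A. \<gamma> k \<ge> 0) \<and> \<eta> - v = (\<Sum>k\<in>A. \<gamma> k *\<^sub>R \<alpha> k)"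
    using kkt[of K \<alpha> \<eta>] unfolding C_def v_def A_def by auto
  then obtain \<gamma> where g: "\<forall>k\<in>A. \<gamma> k \<ge> 0" and u: "\<eta> - v = (\<Sum>k\<in>A. \<gamma> k *\<^sub>R \<alpha> k)" by blast
  define H where "H = span (\<alpha> ` A)"
  have uH: "\<eta> - v \<in> H" unfolding u H_def by (intro span_sum span_mul span_base) auto
  have vH: "v \<in> orthogonal_comp H"
    unfolding orthogonal_comp_def H_def
  proof safe
    fix y assume "y \<in> span (\<alpha> ` A)"
    then have "orthogonal v y"
      by (rule orthogonal_to_span) (auto simp: A_def orthogonal_def inner_commute)
    then show "orthogonal y v" by (simp add: orthogonal_commute)
  qed
  have p1: "orth_proj H \<eta> = \<eta> - v"
    by (rule orth_proj_eqI) (use uH vH in \<open>auto simp: H_def\<close>)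
  have p2: "orth_proj (orthogonal_comp H) \<eta> = v"
    by (rule orth_proj_eqI) (use uH vH orthogonal_comp_subset subspace_orthogonal_comp in auto)
  have "admissible \<alpha> K \<eta> A"
    unfolding admissible_def
  proof (intro conjI)
    show "A \<subseteq> {..<K}" unfolding A_def by auto
    show "\<exists>\<gamma>. (\<forall>k\<in>A. 0 \<le> \<gamma> k) \<and> orth_proj (span (\<alpha> ` A)) \<eta> = (\<Sum>k\<in>A. \<gamma> k *\<^sub>R \<alpha> k)"
      using g u p1 unfolding H_def by auto
    show "\<forall>k\<in>{..<K} - A. \<alpha> k \<bullet> orth_proj (orthogonal_comp (span (\<alpha> ` A))) \<eta> < 0"
      using p2 vC unfolding H_def A_def C_def by (auto simp: order_less_le)
  qed
  then show ?thesis by blast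
qed

lemma canon_proj_eq:
  fixes \<alpha> :: "nat \<Rightarrow> 'a::euclidean_space"
  shows "canon_proj \<alpha> K \<eta> = closest_point {x. \<forall>k<K. \<alpha> k \<bullet> x \<le> 0} \<eta>"
  unfolding canon_proj_def
  by (rule adm_proj, rule someI_ex, rule adm_exists)



lemma exp_comb_le:
  fixes a b t :: real
  assumes "0 \<le> t" "t \<le> 1"
  shows "exp ((1 - t) * a + t * b) \<le> (1 - t) * exp a + t * exp b"
  using convex_onD[OF exp_convex, of t a b] assms by simp

lemma small_pos_le:
  fixes A B :: real
  assumes "B \<ge> 0" "\<And>t. 0 < t \<Longrightarrow> t \<le> 1 \<Longrightarrow> A \<le> t * B"
  shows "A \<le> 0"
proof (rule ccontr)
  assume "\<not> A \<le> 0"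
  then have A: "A > 0" by simp
  define t where "t = min 1 (A / (2 * (B + 1)))"
  have t: "0 < t" "t \<le> 1" using A assms(1) by (auto simp: t_def)
  have "t * B \<le> (A / (2 * (B + 1))) * B"
    using assms(1) by (intro mult_right_mono) (auto simp: t_def)
  also have "\<dots> < A"
  proof -
    have "A * B < A * (2 * (B + 1))" using A assms(1) by (intro mult_strict_left_mono) auto
    then show ?thesis using assms(1) by (simp add: field_simps)
  qed
  finally show False using assms(2)[OF t] by simp
qed

lemma strong_concave:
  fixes \<alpha> :: "nat \<Rightarrow> 'a::euclidean_space" and e \<theta> y :: 'a and F :: "'a \<Rightarrow> real"
  assumes \<omega>: "\<forall>k<K. \<omega> k > 0"
    and F: "\<And>x. F x = - (\<Sum>k<K. \<omega> k * exp (\<alpha> k \<bullet> x)) + e \<bullet> x - (1/2) * (x \<bullet> x)"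
    and max: "\<And>x. F x \<le> F \<theta>"
  shows "F y \<le> F \<theta> - (1/2) * ((y - \<theta>) \<bullet> (y - \<theta>))"
proof -
  define \<phi> where "\<phi> x = - (\<Sum>k<K. \<omega> k * exp (\<alpha> k \<bullet> x))" for x
  define d where "d = y - \<theta>"
  define A where "A = \<phi> y - \<phi> \<theta> + (e - \<theta>) \<bullet> d"
  have Fq: "F x = \<phi> x + e \<bullet> x - (1/2) * (x \<bullet> x)" for x using F unfolding \<phi>_def by simp
  have conc: "(1 - t) * \<phi> \<theta> + t * \<phi> y \<le> \<phi> (\<theta> + t *\<^sub>R d)" if "0 \<le> t" "t \<le> 1" for t
  proof -
    have "(\<Sum>k<K. \<omega> k * exp (\<alpha> k \<bullet> (\<theta> + t *\<^sub>R d)))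
        \<le> (\<Sum>k<K. (1 - t) * (\<omega> k * exp (\<alpha> k \<bullet> \<theta>)) + t * (\<omega> k * exp (\<alpha> k \<bullet> y)))"
    proof (rule sum_mono)
      fix k assume k: "k \<in> {..<K}"
      have eq: "\<alpha> k \<bullet> (\<theta> + t *\<^sub>R d) = (1 - t) * (\<alpha> k \<bullet> \<theta>) + t * (\<alpha> k \<bullet> y)"
        by (simp add: d_def inner_add_right inner_diff_right algebra_simps)
      have "\<omega> k * exp (\<alpha> k \<bullet> (\<theta> + t *\<^sub>R d)) \<le> \<omega> k * ((1 - t) * exp (\<alpha> k \<bullet> \<theta>) + t * exp (\<alpha> k \<bullet> y))"
        unfolding eq using \<omega> k that by (intro mult_left_mono exp_comb_le) auto
      then show "\<omega> k * exp (\<alpha> k \<bullet> (\<theta> + t *\<^sub>R d)) \<le> (1 - t) * (\<omega> k * exp (\<alpha> k \<bullet> \<theta>)) + t * (\<omega> k * exp (\<alpha> k \<bullet> y))"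
        by (simp add: algebra_simps)
    qed
    also have "\<dots> = (1 - t) * (\<Sum>k<K. \<omega> k * exp (\<alpha> k \<bullet> \<theta>)) + t * (\<Sum>k<K. \<omega> k * exp (\<alpha> k \<bullet> y))"
      by (simp add: sum.distrib sum_distrib_left)
    finally show ?thesis unfolding \<phi>_def by simp
  qed
  have qexp: "e \<bullet> (\<theta> + t *\<^sub>R d) - (1/2) * ((\<theta> + t *\<^sub>R d) \<bullet> (\<theta> + t *\<^sub>R d))
      = e \<bullet> \<theta> - (1/2) * (\<theta> \<bullet> \<theta>) + t * ((e - \<theta>) \<bullet> d) - (1/2) * t^2 * (d \<bullet> d)" for t
    by (simp add: inner_add_left inner_add_right inner_diff_left inner_commute power2_eq_square algebra_simps)
  have "A \<le> 0"
  proof (rule small_pos_le)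
    show "0 \<le> (1/2) * (d \<bullet> d)" by simp
    fix t :: real assume t: "0 < t" "t \<le> 1"
    have "F (\<theta> + t *\<^sub>R d) \<le> F \<theta>" by (rule max)
    then have "\<phi> (\<theta> + t *\<^sub>R d) + t * ((e - \<theta>) \<bullet> d) - (1/2) * t^2 * (d \<bullet> d) \<le> \<phi> \<theta>"
      unfolding Fq using qexp[of t] by simp
    with conc[of t] t have "t * A \<le> (1/2) * t^2 * (d \<bullet> d)"
      unfolding A_def by (simp add: algebra_simps)
    then have "t * A \<le> t * ((1/2) * t * (d \<bullet> d))" by (simp add: power2_eq_square algebra_simps)
    then show "A \<le> t * ((1/2) * (d \<bullet> d))" using t by (simp add: mult_le_cancel_left)
  qed
  moreover have "F y = F \<theta> + A - (1/2) * (d \<bullet> d)"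
    using qexp[of 1] unfolding Fq A_def by (simp add: d_def)
  ultimately show ?thesis unfolding d_def by simp
qed



lemma exp_cube:
  fixes y :: real assumes "0 \<le> y" shows "(y/3)^3 \<le> exp y"
proof -
  have "y/3 \<le> exp (y/3)" using exp_ge_add_one_self[of "y/3"] by linarith
  then have "(y/3)^3 \<le> exp (y/3) ^ 3"
    using assms by (intro power_mono) auto
  also have "exp (y/3) ^ 3 = exp y"
    using exp_of_nat_mult[of 3 "y/3"] by simp
  finally show ?thesis .
qed

lemma penalty_bound:
  fixes \<gamma> \<omega> \<rho> N s :: real
  assumes "\<gamma> \<ge> 0" "\<omega> > 0" "\<rho> > 0" "N > 0" "N \<ge> 27 * \<gamma> / (\<omega> * \<rho>^2)"
  shows "\<gamma> * s - \<omega> * exp (N * s) / N^2 \<le> \<gamma> * \<rho>"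
proof (cases "s \<le> \<rho>")
  case True
  have "\<gamma> * s \<le> \<gamma> * \<rho>" using True assms by (intro mult_left_mono) auto
  moreover have "\<omega> * exp (N * s) / N^2 \<ge> 0" using assms by auto
  ultimately show ?thesis by linarith
next
  case False
  then have s: "s > \<rho>" "s > 0" using assms by auto
  have "\<omega> * ((N * s / 3)^3) \<le> \<omega> * exp (N * s)"
    using assms s by (intro mult_left_mono exp_cube) auto
  then have 1: "\<omega> * N * s^3 / 27 \<le> \<omega> * exp (N * s) / N^2"
    using assms by (simp add: field_simps power3_eq_cube power2_eq_square)
  have "27 * \<gamma> \<le> N * (\<omega> * \<rho>^2)" using assms by (simp add: field_simps)
  then have "27 * \<gamma> * s \<le> N * (\<omega> * \<rho>^2) * s" using s by (intro mult_right_mono) auto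
  also have "\<dots> \<le> N * (\<omega> * s^2) * s"
    using s assms by (intro mult_right_mono mult_left_mono power_mono) auto
  finally have "\<gamma> * s \<le> \<omega> * N * s^3 / 27" by (simp add: power3_eq_cube power2_eq_square algebra_simps)
  with 1 have "\<gamma> * s - \<omega> * exp (N * s) / N^2 \<le> 0" by linarith
  also have "0 \<le> \<gamma> * \<rho>" using assms by auto
  finally show ?thesis .
qed

lemma key_ineq:
  fixes \<alpha> :: "nat \<Rightarrow> 'a::euclidean_space" and F :: "'a \<Rightarrow> real"
  assumes \<omega>: "\<forall>k<K. \<omega> k > 0"
    and F: "\<And>x. F x = - (\<Sum>k<K. \<omega> k * exp (\<alpha> k \<bullet> x)) + (N *\<^sub>R e) \<bullet> x - (1/2) * (x \<bullet> x)"
    and max: "\<And>x. F x \<le> F (N *\<^sub>R x0)"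
    and N: "N > 0"
    and vC: "\<forall>k<K. \<alpha> k \<bullet> v \<le> 0"
    and AK: "A \<subseteq> {..<K}"
    and Av: "\<forall>k\<in>A. \<alpha> k \<bullet> v = 0"
    and ev: "\<eta> - v = (\<Sum>k\<in>A. \<gamma> k *\<^sub>R \<alpha> k)"
  shows "(x0 - v) \<bullet> (x0 - v) \<le> (\<Sum>k<K. \<omega> k) / N^2 + (e - \<eta>) \<bullet> (x0 - v)
            + (\<Sum>k\<in>A. \<gamma> k * (\<alpha> k \<bullet> x0) - \<omega> k * exp (N * (\<alpha> k \<bullet> x0)) / N^2)"
    and "F (N *\<^sub>R x0) \<ge> - (\<Sum>k<K. \<omega> k) + N^2 * (e \<bullet> v) - (1/2) * N^2 * (v \<bullet> v)"
    and "F (N *\<^sub>R x0) \<le> N^2 * (e \<bullet> x0) - (1/2) * N^2 * (x0 \<bullet> x0)"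
proof -
  define W where "W = (\<Sum>k<K. \<omega> k)"
  define P where "P = (\<Sum>k<K. \<omega> k * exp (\<alpha> k \<bullet> (N *\<^sub>R x0)))"
  have Fv_low: "F (N *\<^sub>R v) \<ge> - W + N^2 * (e \<bullet> v) - (1/2) * N^2 * (v \<bullet> v)"
  proof -
    have "(\<Sum>k<K. \<omega> k * exp (\<alpha> k \<bullet> (N *\<^sub>R v))) \<le> (\<Sum>k<K. \<omega> k * 1)"
    proof (rule sum_mono)
      fix k assume "k \<in> {..<K}"
      then have "\<alpha> k \<bullet> (N *\<^sub>R v) \<le> 0" using vC N by (simp add: mult_nonneg_nonpos)
      then show "\<omega> k * exp (\<alpha> k \<bullet> (N *\<^sub>R v)) \<le> \<omega> k * 1"
        using \<omega> \<open>k \<in> {..<K}\<close> by (intro mult_left_mono) auto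
    qed
    then show ?thesis unfolding F W_def by (simp add: power2_eq_square)
  qed
  have PA: "(\<Sum>k\<in>A. \<omega> k * exp (N * (\<alpha> k \<bullet> x0))) \<le> P"
  proof -
    have "P = (\<Sum>k<K. \<omega> k * exp (N * (\<alpha> k \<bullet> x0)))" unfolding P_def by simp
    moreover have "(\<Sum>k\<in>A. \<omega> k * exp (N * (\<alpha> k \<bullet> x0))) \<le> (\<Sum>k<K. \<omega> k * exp (N * (\<alpha> k \<bullet> x0)))"
      using AK \<omega> by (intro sum_mono2) (auto intro: less_imp_le)
    ultimately show ?thesis by simp
  qed
  have Fx: "F (N *\<^sub>R x0) = - P + N^2 * (e \<bullet> x0) - (1/2) * N^2 * (x0 \<bullet> x0)"
    unfolding F P_def by (simp add: power2_eq_square)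
  have P0: "P \<ge> 0" unfolding P_def using \<omega> by (intro sum_nonneg) (auto intro: less_imp_le)
  show "F (N *\<^sub>R x0) \<le> N^2 * (e \<bullet> x0) - (1/2) * N^2 * (x0 \<bullet> x0)" using Fx P0 by simp
  have sc: "F (N *\<^sub>R v) \<le> F (N *\<^sub>R x0) - (1/2) * ((N *\<^sub>R v - N *\<^sub>R x0) \<bullet> (N *\<^sub>R v - N *\<^sub>R x0))"
    by (rule strong_concave[OF \<omega> F max])
  show "F (N *\<^sub>R x0) \<ge> - (\<Sum>k<K. \<omega> k) + N^2 * (e \<bullet> v) - (1/2) * N^2 * (v \<bullet> v)"
    using max[of "N *\<^sub>R v"] Fv_low unfolding W_def by linarith
  have nn: "(N *\<^sub>R v - N *\<^sub>R x0) \<bullet> (N *\<^sub>R v - N *\<^sub>R x0) = N^2 * ((x0 - v) \<bullet> (x0 - v))"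
  proof -
    have "N *\<^sub>R v - N *\<^sub>R x0 = - (N *\<^sub>R (x0 - v))" by (simp add: scaleR_diff_right)
    then show ?thesis by (simp add: power2_eq_square)
  qed
  have main: "N^2 * ((x0 - v) \<bullet> (x0 - v)) \<le> W - P + N^2 * ((e - v) \<bullet> (x0 - v))"
  proof -
    have h: "- W + N^2 * (e \<bullet> v) - (1/2) * N^2 * (v \<bullet> v) \<le> - P + N^2 * (e \<bullet> x0) - (1/2) * N^2 * (x0 \<bullet> x0)
        - (1/2) * (N^2 * ((x0 - v) \<bullet> (x0 - v)))"
      using sc Fv_low Fx nn by linarith
    have e1: "(x0 - v) \<bullet> (x0 - v) = x0 \<bullet> x0 - 2 * (x0 \<bullet> v) + v \<bullet> v"
      by (simp add: inner_diff_left inner_diff_right inner_commute)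
    have e2: "(e - v) \<bullet> (x0 - v) = e \<bullet> x0 - e \<bullet> v - x0 \<bullet> v + v \<bullet> v"
      by (simp add: inner_diff_left inner_diff_right inner_commute)
    show ?thesis using h unfolding e1 e2 ring_distribs by linarith
  qed
  have ev0: "(\<eta> - v) \<bullet> v = 0" unfolding ev using Av by (simp add: inner_sum_left)
  have "(e - v) \<bullet> (x0 - v) = (e - \<eta>) \<bullet> (x0 - v) + (\<eta> - v) \<bullet> x0"
    using ev0 by (simp add: inner_diff_left inner_diff_right)
  also have "(\<eta> - v) \<bullet> x0 = (\<Sum>k\<in>A. \<gamma> k * (\<alpha> k \<bullet> x0))" unfolding ev by (simp add: inner_sum_left)
  finally have eq: "(e - v) \<bullet> (x0 - v) = (e - \<eta>) \<bullet> (x0 - v) + (\<Sum>k\<in>A. \<gamma> k * (\<alpha> k \<bullet> x0))" .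
  have "N^2 * ((x0 - v) \<bullet> (x0 - v)) \<le> W - (\<Sum>k\<in>A. \<omega> k * exp (N * (\<alpha> k \<bullet> x0)))
      + N^2 * ((e - \<eta>) \<bullet> (x0 - v) + (\<Sum>k\<in>A. \<gamma> k * (\<alpha> k \<bullet> x0)))"
    using main PA unfolding eq by linarith
  then have "(x0 - v) \<bullet> (x0 - v) \<le> (W - (\<Sum>k\<in>A. \<omega> k * exp (N * (\<alpha> k \<bullet> x0)))) / N^2
      + ((e - \<eta>) \<bullet> (x0 - v) + (\<Sum>k\<in>A. \<gamma> k * (\<alpha> k \<bullet> x0)))"
    using N by (simp add: field_simps)
  then show "(x0 - v) \<bullet> (x0 - v) \<le> (\<Sum>k<K. \<omega> k) / N^2 + (e - \<eta>) \<bullet> (x0 - v)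
            + (\<Sum>k\<in>A. \<gamma> k * (\<alpha> k \<bullet> x0) - \<omega> k * exp (N * (\<alpha> k \<bullet> x0)) / N^2)"
    unfolding W_def by (simp add: sum_subtractf diff_divide_distrib sum_divide_distrib)
qed



lemma W_over_sq: "(\<lambda>n. (W::real) / (real n)^2) \<longlonglongrightarrow> 0"
proof -
  have "(\<lambda>n. (W / real n) * (1 / real n)) \<longlonglongrightarrow> 0 * 0"
    by (intro tendsto_mult lim_const_over_n)
  then show ?thesis by (simp add: power2_eq_square)
qed

lemma ev_real_ge: "\<forall>\<^sub>F n in sequentially. c \<le> real n"
  using filterlim_real_sequentially unfolding filterlim_at_top by blast

lemma asymp:
  fixes \<alpha> :: "nat \<Rightarrow> 'a::euclidean_space" and K :: nat
    and \<omega> :: "nat \<Rightarrow> real" and \<eta>s :: "nat \<Rightarrow> 'a" and \<eta> :: 'a and \<theta> :: "nat \<Rightarrow> 'a"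
    and f :: "nat \<Rightarrow> 'a \<Rightarrow> real"
  defines "v \<equiv> closest_point {x. \<forall>k<K. \<alpha> k \<bullet> x \<le> 0} \<eta>"
  assumes \<omega>: "\<forall>k<K. \<omega> k > 0"
    and conv: "(\<lambda>n. \<eta>s n /\<^sub>R real n) \<longlonglongrightarrow> \<eta>"
    and feq: "\<forall>n x. f n x = - (\<Sum>k<K. \<omega> k * exp (\<alpha> k \<bullet> x)) + \<eta>s n \<bullet> x - (1/2) * (x \<bullet> x)"
    and maxi: "\<forall>n x. x \<noteq> \<theta> n \<longrightarrow> f n x < f n (\<theta> n)"
  shows "(\<lambda>n. \<theta> n /\<^sub>R real n) \<longlonglongrightarrow> v"
    and "(\<lambda>n. f n (\<theta> n) / (real n)^2) \<longlonglongrightarrow> (1/2) * (norm v)^2"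
proof -
  define A where "A = {k. k < K \<and> \<alpha> k \<bullet> v = 0}"
  have vC: "v \<in> {x. \<forall>k<K. \<alpha> k \<bullet> x \<le> 0}" and "\<exists>\<gamma>. (\<forall>k\<in>A. \<gamma> k \<ge> 0) \<and> \<eta> - v = (\<Sum>k\<in>A. \<gamma> k *\<^sub>R \<alpha> k)"
    using kkt[of K \<alpha> \<eta>] unfolding v_def A_def by auto
  then obtain \<gamma> where g: "\<forall>k\<in>A. \<gamma> k \<ge> 0" and ev: "\<eta> - v = (\<Sum>k\<in>A. \<gamma> k *\<^sub>R \<alpha> k)" by blast
  have AK: "A \<subseteq> {..<K}" and Av: "\<forall>k\<in>A. \<alpha> k \<bullet> v = 0" and finA: "finite A" unfolding A_def by auto
  have ev0: "(\<eta> - v) \<bullet> v = 0" unfolding ev using Av by (simp add: inner_sum_left)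
  define e where "e n = \<eta>s n /\<^sub>R real n" for n
  define x where "x n = \<theta> n /\<^sub>R real n" for n
  define W where "W = (\<Sum>k<K. \<omega> k)"
  have KI: "(x n - v) \<bullet> (x n - v) \<le> W / (real n)^2 + (e n - \<eta>) \<bullet> (x n - v)
            + (\<Sum>k\<in>A. \<gamma> k * (\<alpha> k \<bullet> x n) - \<omega> k * exp (real n * (\<alpha> k \<bullet> x n)) / (real n)^2)"
    and KL: "f n (\<theta> n) \<ge> - W + (real n)^2 * (e n \<bullet> v) - (1/2) * (real n)^2 * (v \<bullet> v)"
    and KU: "f n (\<theta> n) \<le> (real n)^2 * (e n \<bullet> x n) - (1/2) * (real n)^2 * (x n \<bullet> x n)"
    if n: "n > 0" for n
  proof -
    have th: "\<theta> n = real n *\<^sub>R x n" and es: "\<eta>s n = real n *\<^sub>R e n"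
      using n unfolding x_def e_def by auto
    have F: "\<And>y. f n y = - (\<Sum>k<K. \<omega> k * exp (\<alpha> k \<bullet> y)) + (real n *\<^sub>R e n) \<bullet> y - (1/2) * (y \<bullet> y)"
      using feq es by simp
    have mx: "\<And>y. f n y \<le> f n (real n *\<^sub>R x n)"
      using maxi th by (metis order_le_less order_refl)
    note K = key_ineq[of K \<omega> "f n" \<alpha> "real n" "e n" "x n" v A \<eta> \<gamma>, OF \<omega> F mx _ _ AK Av ev]
    show "(x n - v) \<bullet> (x n - v) \<le> W / (real n)^2 + (e n - \<eta>) \<bullet> (x n - v)
            + (\<Sum>k\<in>A. \<gamma> k * (\<alpha> k \<bullet> x n) - \<omega> k * exp (real n * (\<alpha> k \<bullet> x n)) / (real n)^2)"
      "f n (\<theta> n) \<ge> - W + (real n)^2 * (e n \<bullet> v) - (1/2) * (real n)^2 * (v \<bullet> v)"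
      "f n (\<theta> n) \<le> (real n)^2 * (e n \<bullet> x n) - (1/2) * (real n)^2 * (x n \<bullet> x n)"
      using K n vC unfolding W_def th by auto
  qed
  have econv: "e \<longlonglongrightarrow> \<eta>" unfolding e_def using conv .
  show xconv: "x \<longlonglongrightarrow> v"
    unfolding tendsto_iff
  proof (intro allI impI)
    fix \<epsilon> :: real assume \<epsilon>: "\<epsilon> > 0"
    define \<epsilon>' where "\<epsilon>' = min \<epsilon> 1"
    define \<delta> where "\<delta> = \<epsilon>'^2 / 4"
    define G where "G = (\<Sum>k\<in>A. \<gamma> k)"
    define \<rho> where "\<rho> = \<delta> / (2 * (G + 1))"
    have \<epsilon>': "0 < \<epsilon>'" "\<epsilon>' \<le> 1" "\<epsilon>' \<le> \<epsilon>" using \<epsilon> by (auto simp: \<epsilon>'_def)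
    have \<delta>: "\<delta> > 0" using \<epsilon>' by (simp add: \<delta>_def)
    have G0: "G \<ge> 0" unfolding G_def using g by (simp add: sum_nonneg)
    have \<rho>: "\<rho> > 0" using \<delta> G0 by (simp add: \<rho>_def)
    have Gr: "G * \<rho> \<le> \<delta> / 2"
      using \<delta> G0 by (simp add: \<rho>_def field_simps)
    have E1: "\<forall>\<^sub>F n in sequentially. n > 0" by (simp add: eventually_gt_at_top)
    have E2: "\<forall>\<^sub>F n in sequentially. W / (real n)^2 < \<delta> / 2"
      using W_over_sq[of W] \<delta> by (intro order_tendstoD(2)) auto
    have E3: "\<forall>\<^sub>F n in sequentially. dist (e n) \<eta> < \<delta>"
      using econv \<delta> unfolding tendsto_iff by blast
    have E4: "\<forall>\<^sub>F n in sequentially. \<forall>k\<in>A. 27 * \<gamma> k / (\<omega> k * \<rho>^2) \<le> real n"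
      using finA by (intro eventually_ball_finite ballI ev_real_ge)
    show "\<forall>\<^sub>F n in sequentially. dist (x n) v < \<epsilon>"
      using E1 E2 E3 E4
    proof eventually_elim
      case (elim n)
      define z where "z = x n - v"
      define r where "r = norm z"
      have sum_le: "(\<Sum>k\<in>A. \<gamma> k * (\<alpha> k \<bullet> x n) - \<omega> k * exp (real n * (\<alpha> k \<bullet> x n)) / (real n)^2)
          \<le> (\<Sum>k\<in>A. \<gamma> k * \<rho>)"
      proof (rule sum_mono)
        fix k assume k: "k \<in> A"
        then have "\<omega> k > 0" using \<omega> AK by auto
        then show "\<gamma> k * (\<alpha> k \<bullet> x n) - \<omega> k * exp (real n * (\<alpha> k \<bullet> x n)) / (real n)^2 \<le> \<gamma> k * \<rho>"
          using k g elim \<rho> by (intro penalty_bound) auto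
      qed
      also have "\<dots> = G * \<rho>" unfolding G_def by (simp add: sum_distrib_right)
      finally have sum_le: "(\<Sum>k\<in>A. \<gamma> k * (\<alpha> k \<bullet> x n) - \<omega> k * exp (real n * (\<alpha> k \<bullet> x n)) / (real n)^2) \<le> \<delta> / 2"
        using Gr by linarith
      have cs: "(e n - \<eta>) \<bullet> z \<le> \<delta> * r"
      proof -
        have "(e n - \<eta>) \<bullet> z \<le> norm (e n - \<eta>) * r" unfolding r_def by (rule norm_cauchy_schwarz)
        also have "\<dots> \<le> \<delta> * r" using elim unfolding r_def dist_norm
          by (intro mult_right_mono) auto
        finally show ?thesis .
      qed
      have rr: "r^2 \<le> \<delta> + \<delta> * r"
        using KI[OF elim(1)] sum_le cs elim(2) unfolding z_def[symmetric] r_def power2_norm_eq_inner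
        by linarith
      have r0: "r \<ge> 0" unfolding r_def by simp
      have "r < \<epsilon>'"
      proof (rule ccontr)
        assume "\<not> r < \<epsilon>'"
        then have re: "\<epsilon>' \<le> r" by simp
        have "\<epsilon>'^2 \<le> r^2" using re \<epsilon>' by (intro power_mono) auto
        then have a: "\<delta> \<le> r^2 / 4" unfolding \<delta>_def by simp
        have "\<delta> * r \<le> (\<epsilon>' / 4) * r"
          unfolding \<delta>_def using \<epsilon>' r0 by (intro mult_right_mono) (auto simp: power2_eq_square mult_le_cancel_left1)
        also have "\<dots> \<le> (r / 4) * r" using re r0 by (intro mult_right_mono) auto
        finally have b: "\<delta> * r \<le> r^2 / 4" by (simp add: power2_eq_square)
        have "r^2 \<le> 0" using rr a b by linarith
        moreover have "0 < r" using re \<epsilon>' by linarith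
        ultimately show False by simp
      qed
      then show ?case using \<epsilon>' unfolding r_def z_def dist_norm by linarith
    qed
  qed
  have lim: "(1/2) * (norm v)^2 = \<eta> \<bullet> v - (1/2) * (v \<bullet> v)"
    using ev0 by (simp add: power2_norm_eq_inner inner_diff_left)
  have low: "(\<lambda>n. - (W / (real n)^2) + e n \<bullet> v - (1/2) * (v \<bullet> v)) \<longlonglongrightarrow> - 0 + \<eta> \<bullet> v - (1/2) * (v \<bullet> v)"
    by (intro tendsto_intros W_over_sq econv)
  have up: "(\<lambda>n. e n \<bullet> x n - (1/2) * (x n \<bullet> x n)) \<longlonglongrightarrow> \<eta> \<bullet> v - (1/2) * (v \<bullet> v)"
    by (intro tendsto_intros econv xconv)
  show "(\<lambda>n. f n (\<theta> n) / (real n)^2) \<longlonglongrightarrow> (1/2) * (norm v)^2"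
    unfolding lim
  proof (rule tendsto_sandwich[OF _ _ _ up])
    show "(\<lambda>n. - (W / (real n)^2) + e n \<bullet> v - (1/2) * (v \<bullet> v)) \<longlonglongrightarrow> \<eta> \<bullet> v - (1/2) * (v \<bullet> v)"
      using low by simp
    show "\<forall>\<^sub>F n in sequentially. - (W / (real n)^2) + e n \<bullet> v - (1/2) * (v \<bullet> v) \<le> f n (\<theta> n) / (real n)^2"
      using eventually_gt_at_top[of 0]
    proof eventually_elim
      case (elim n)
      then have N: "(real n)^2 > 0" by simp
      have "(- W + (real n)^2 * (e n \<bullet> v) - (1/2) * (real n)^2 * (v \<bullet> v)) / (real n)^2 \<le> f n (\<theta> n) / (real n)^2"
        using KL[OF elim] N by (intro divide_right_mono) auto
      moreover have "(- W + (real n)^2 * (e n \<bullet> v) - (1/2) * (real n)^2 * (v \<bullet> v)) / (real n)^2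
          = - (W / (real n)^2) + e n \<bullet> v - (1/2) * (v \<bullet> v)"
        using N by (simp add: add_divide_distrib diff_divide_distrib)
      ultimately show ?case by simp
    qed
    show "\<forall>\<^sub>F n in sequentially. f n (\<theta> n) / (real n)^2 \<le> e n \<bullet> x n - (1/2) * (x n \<bullet> x n)"
      using eventually_gt_at_top[of 0]
    proof eventually_elim
      case (elim n)
      then have N: "(real n)^2 > 0" by simp
      show ?case using KU[OF elim] N by (simp add: field_simps)
    qed
  qed
qed


theorem proposition4:
  fixes \<alpha> :: "nat \<Rightarrow> 'a::euclidean_space" and K :: nat
  assumes "\<forall>k<K. \<alpha> k \<noteq> 0"
  shows
    "(\<forall>\<eta>::'a. \<eta> \<noteq> 0 \<longrightarrow> (\<exists>S. admissible \<alpha> K \<eta> S))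
     \<and> (\<forall>\<eta> S S'. \<eta> \<noteq> 0 \<longrightarrow> admissible \<alpha> K \<eta> S \<longrightarrow> admissible \<alpha> K \<eta> S' \<longrightarrow>
          orth_proj (orthogonal_comp (span (\<alpha> ` S))) \<eta>
          = orth_proj (orthogonal_comp (span (\<alpha> ` S'))) \<eta>)
     \<and> continuous_on (- {0}) (canon_proj \<alpha> K)
     \<and> (\<forall>(\<omega>::nat \<Rightarrow> real) (\<eta>s::nat \<Rightarrow> 'a) (\<eta>::'a) (\<theta>::nat \<Rightarrow> 'a) (f::nat \<Rightarrow> 'a \<Rightarrow> real).
          (\<forall>k<K. \<omega> k > 0) \<longrightarrow>
          ((\<lambda>n. \<eta>s n /\<^sub>R real n) \<longlonglongrightarrow> \<eta>) \<longrightarrow> \<eta> \<noteq> 0 \<longrightarrow>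
          (\<forall>n x. f n x = - (\<Sum>k<K. \<omega> k * exp (\<alpha> k \<bullet> x)) + \<eta>s n \<bullet> x - (1/2) * (x \<bullet> x)) \<longrightarrow>
          (\<forall>n x. x \<noteq> \<theta> n \<longrightarrow> f n x < f n (\<theta> n)) \<longrightarrow>
          ((\<lambda>n. \<theta> n /\<^sub>R real n) \<longlonglongrightarrow> canon_proj \<alpha> K \<eta>) \<and>
          ((\<lambda>n. f n (\<theta> n) / (real n)^2) \<longlonglongrightarrow> (1/2) * (norm (canon_proj \<alpha> K \<eta>))^2))"
proof (intro conjI allI impI)
  fix \<eta> :: 'a
  show "\<exists>S. admissible \<alpha> K \<eta> S" by (rule adm_exists)
next
  fix \<eta> :: 'a and S S'
  assume "admissible \<alpha> K \<eta> S" "admissible \<alpha> K \<eta> S'"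
  then show "orth_proj (orthogonal_comp (span (\<alpha> ` S))) \<eta> = orth_proj (orthogonal_comp (span (\<alpha> ` S'))) \<eta>"
    using adm_proj[of \<alpha> K \<eta> S] adm_proj[of \<alpha> K \<eta> S'] by simp
next
  have eq: "canon_proj \<alpha> K = closest_point {x. \<forall>k<K. \<alpha> k \<bullet> x \<le> 0}"
    using canon_proj_eq by blast
  have "closed {x. \<forall>k<K. \<alpha> k \<bullet> x \<le> 0}" "convex {x. \<forall>k<K. \<alpha> k \<bullet> x \<le> 0}"
       "{x. \<forall>k<K. \<alpha> k \<bullet> x \<le> 0} \<noteq> {}"
    using C_props[of K \<alpha>] by blast+
  then show "continuous_on (- {0}) (canon_proj \<alpha> K)"
    unfolding eq by (intro continuous_on_closest_point)
next
  fix \<omega> :: "nat \<Rightarrow> real" and \<eta>s :: "nat \<Rightarrow> 'a" and \<eta> :: 'a and \<theta> :: "nat \<Rightarrow> 'a" and f :: "nat \<Rightarrow> 'a \<Rightarrow> real"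
  assume a: "\<forall>k<K. \<omega> k > 0" "(\<lambda>n. \<eta>s n /\<^sub>R real n) \<longlonglongrightarrow> \<eta>"
    "\<forall>n x. f n x = - (\<Sum>k<K. \<omega> k * exp (\<alpha> k \<bullet> x)) + \<eta>s n \<bullet> x - (1/2) * (x \<bullet> x)"
    "\<forall>n x. x \<noteq> \<theta> n \<longrightarrow> f n x < f n (\<theta> n)"
  note r = asymp[OF a]
  show "(\<lambda>n. \<theta> n /\<^sub>R real n) \<longlonglongrightarrow> canon_proj \<alpha> K \<eta>"
    unfolding canon_proj_eq using r(1) .
  show "(\<lambda>n. f n (\<theta> n) / (real n)^2) \<longlonglongrightarrow> (1/2) * (norm (canon_proj \<alpha> K \<eta>))^2"
    unfolding canon_proj_eq using r(2) .
qed

end
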